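(* Let $p$ be a prime, $q=p^l$ ($l\ge 1$), $m\ge 1$ an integer and $n=2m$. Let $\alpha$ be a primitive element of $\mathbb{F}_{q^n}$. For $0\leqslant r\leqslant n(q-1)$ and $k\in M_r$, let $$\Theta^{(r)}_k=\{\alpha^u \mid 0\leqslant u\leqslant q^n-1,\ \mathrm{wt}_q(u)=n(q-1)-r,\ |O(u)-E(u)|=k\}.$$ Then $$\big|\Theta^{(r)}_k\big|=\begin{cases}2\left(\sum_{i=0}^{m}(-1)^i\binom{m}{i}\binom{\frac{n(q-1)-r-k}{2}-iq+m-1}{\frac{n(q-1)-r-k}{2}-iq}\right)\left(\sum_{i=0}^{m}(-1)^i\binom{m}{i}\binom{\frac{n(q-1)-r+k}{2}-iq+m-1}{\frac{n(q-1)-r+k}{2}-iq}\right) & \text{if } k\neq 0,\\[2mm] \left(\sum_{i=0}^{m}(-1)^i\binom{m}{i}\binom{\frac{n(q-1)-r}{2}-iq+m-1}{\frac{n(q-1)-r}{2}-iq}\right)^2 & \text{if } k=0.\end{cases}$$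
   Context: Every integer $u$ with $0\leqslant u\leqslant q^n-1$ is written uniquely as $u=\sum_{i=0}^{n-1}u_iq^i$ with $u_i\in\{0,1,\dots,q-1\}$; $\mathrm{wt}_q(u)=\sum_{i=0}^{n-1}u_i$, $O(u)=\sum_{i \text{ odd}}u_i$, $E(u)=\sum_{i\text{ even}}u_i$ (indices $0\le i\le n-1$). For $0\leqslant r\leqslant n(q-1)$, $M_r$ is the set of even integers $k$ with $0\le k\le m(q-1)$ if $r$ is even, and the set of odd integers $k$ with $0\le k\le m(q-1)$ if $r$ is odd. Binomial coefficients $\binom{a}{b}$ with $b<0$ are taken to be $0$. *)

theory Defs
  imports Main "HOL-Computational_Algebra.Primes"
begin

definition qdigit :: "nat \<Rightarrow> nat \<Rightarrow> nat \<Rightarrow> nat" where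
  "qdigit q i u = (u div q ^ i) mod q"

definition wtq :: "nat \<Rightarrow> nat \<Rightarrow> nat \<Rightarrow> nat" where
  "wtq q n u = (\<Sum>i<n. qdigit q i u)"

definition Oq :: "nat \<Rightarrow> nat \<Rightarrow> nat \<Rightarrow> nat" where
  "Oq q n u = (\<Sum>i\<in>{i. i < n \<and> odd i}. qdigit q i u)"

definition Eq :: "nat \<Rightarrow> nat \<Rightarrow> nat \<Rightarrow> nat" where
  "Eq q n u = (\<Sum>i\<in>{i. i < n \<and> even i}. qdigit q i u)"

text \<open>Binomial coefficient with integer arguments, taken to be 0 when the lower index is negative.
  (Whenever it is used below with b \<ge> 0, the upper index is \<ge> 0.)\<close>
definition ibinom :: "int \<Rightarrow> int \<Rightarrow> int" where
  "ibinom a b = (if b < 0 then 0 else int (nat a choose nat b))"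

definition Ssum :: "nat \<Rightarrow> nat \<Rightarrow> int \<Rightarrow> int" where
  "Ssum m q t = (\<Sum>i=0..m. (-1) ^ i * int (m choose i) *
       ibinom (t - int i * int q + int m - 1) (t - int i * int q))"

end

theory Submission
  imports Defs "HOL-Library.FuncSet" "HOL-Computational_Algebra.Formal_Power_Series"
begin

unbundle fps_syntax


definition Hs :: "nat \<Rightarrow> int fps" where
  "Hs j = Abs_fps (\<lambda>s. of_nat ((s + j) choose s))"

lemma Hs0: "Hs 0 * (1 - fps_X) = 1"
  unfolding fps_eq_iff
  by (auto simp: Hs_def algebra_simps fps_X_mult_nth)

lemma HsSuc: "Hs (Suc j) * (1 - fps_X) = Hs j"
  unfolding fps_eq_iff
proof
  fix s
  show "(Hs (Suc j) * (1 - fps_X)) $ s = Hs j $ s"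
  proof (cases s)
    case 0 then show ?thesis by (simp add: Hs_def algebra_simps fps_X_mult_nth)
  next
    case (Suc s')
    have "(Suc s' + Suc j) choose Suc s' = (s' + Suc j choose s') + (Suc s' + j choose Suc s')"
      by simp
    then show ?thesis using Suc by (simp add: Hs_def algebra_simps fps_X_mult_nth)
  qed
qed

lemma Hs_inv: "Hs j * (1 - fps_X) ^ Suc j = 1"
proof (induction j)
  case 0 then show ?case using Hs0 by simp
next
  case (Suc j)
  have "Hs (Suc j) * (1 - fps_X) ^ Suc (Suc j) = (Hs (Suc j) * (1 - fps_X)) * (1 - fps_X) ^ Suc j"
    by (simp only: power_Suc mult.assoc)
  also have "\<dots> = 1" using HsSuc Suc.IH by simp
  finally show ?case .
qed

lemma a1: "(- (fps_X ^ q)) ^ i = (-1) ^ i * (fps_X :: int fps) ^ (i * q)"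
  by (metis power_minus power_mult mult.commute)
lemma a2: "fps_const ((-1)^i * int c) = (-1)^i * (of_nat c :: int fps)"
proof -
  have "fps_const ((-1::int)^i) = (-1)^i" by (induction i) (simp_all add: fps_const_mult[symmetric] fps_const_neg[symmetric] del: fps_const_neg)
  then show ?thesis by (simp add: fps_const_mult[symmetric] fps_of_nat)
qed
lemma term_eq: "(of_nat c * (- (fps_X ^ q)) ^ i * 1 ^ (m - i)) * (H::int fps) =
   fps_const ((-1)^i * int c) * (fps_X ^ (i * q) * H)"
  unfolding a1 a2 by (simp only: power_one mult_1_right mult.assoc mult.left_commute)

lemma count_tuples:
  fixes m q t :: nat
  assumes "m \<ge> 1"
  shows "int (card {g \<in> PiE {..<m} (\<lambda>_. {..<q}). sum g {..<m} = t}) =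
    (\<Sum>i\<le>m. (-1)^i * int (m choose i) * (if i*q \<le> t then int ((t - i*q + m - 1) choose (t - i*q)) else 0))"
proof -
  define T where "T = PiE {..<m} (\<lambda>_. {..<q::nat})"
  define P :: "int fps" where "P = (\<Sum>d<q. fps_X ^ d)"
  have fT: "finite T" unfolding T_def by (simp add: finite_PiE)
  have "P ^ m = (\<Prod>x\<in>{..<m}. \<Sum>d\<in>{..<q}. fps_X ^ d)" by (simp add: P_def)
  also have "\<dots> = (\<Sum>g\<in>T. \<Prod>x\<in>{..<m}. fps_X ^ g x)"
    unfolding T_def by (rule prod_sum_PiE) auto
  also have "\<dots> = (\<Sum>g\<in>T. fps_X ^ sum g {..<m})" by (simp add: power_sum)
  finally have e1: "P ^ m = (\<Sum>g\<in>T. fps_X ^ sum g {..<m})" .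
  have c1: "(P ^ m) $ t = int (card {g \<in> T. sum g {..<m} = t})"
    unfolding e1 fps_sum_nth using fT
    by (simp add: sum.inter_filter[symmetric]) (metis (mono_tags, lifting))
  have e4: "P * (1 - fps_X) = 1 - (fps_X ^ q)"
    unfolding P_def by (simp add: one_diff_power_eq mult.commute)
  have "P ^ m = P ^ m * (Hs (m - 1) * (1 - fps_X) ^ m)"
    using Hs_inv[of "m - 1"] assms by simp
  also have "\<dots> = (P * (1 - fps_X)) ^ m * Hs (m - 1)"
    by (simp only: power_mult_distrib mult.assoc mult.commute mult.left_commute)
  also have "\<dots> = (- (fps_X ^ q) + 1) ^ m * Hs (m - 1)" using e4 by simp
  also have "\<dots> = (\<Sum>i\<le>m. of_nat (m choose i) * (- (fps_X ^ q)) ^ i * 1 ^ (m - i)) * Hs (m - 1)"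
    by (simp only: binomial_ring)
  also have "\<dots> = (\<Sum>i\<le>m. fps_const ((-1)^i * int (m choose i)) * (fps_X ^ (i * q) * Hs (m - 1)))"
    unfolding sum_distrib_right by (intro sum.cong refl) (rule term_eq)
  finally have e2: "P ^ m = \<dots>" .
  have "(P ^ m) $ t = (\<Sum>i\<le>m. (-1)^i * int (m choose i) * (if i*q \<le> t then int ((t - i*q + m - 1) choose (t - i*q)) else 0))"
    unfolding e2 fps_sum_nth fps_mult_left_const_nth fps_X_power_mult_nth
    using assms by (intro sum.cong) (auto simp: Hs_def not_less)
  with c1 show ?thesis unfolding T_def by simp
qed



lemma digits_mod: "u mod q ^ n = (\<Sum>i<n. qdigit q i u * q ^ i)"
proof (induction n)
  case 0 then show ?case by simp
next
  case (Suc n)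
  have "u mod q ^ Suc n = u mod (q ^ n * q)" by (simp only: power_Suc2)
  also have "\<dots> = q ^ n * (u div q ^ n mod q) + u mod q ^ n"
    by (rule mod_mult2_eq)
  finally have "u mod q ^ Suc n = q ^ n * (u div q ^ n mod q) + u mod q ^ n" .
  then show ?case using Suc by (simp add: qdigit_def)
qed

lemma qdigit_shift: "qdigit q (Suc i) u = qdigit q i (u div q)"
  by (simp add: qdigit_def div_mult2_eq power_Suc2 mult.commute)

lemma top_decomp: "(q::nat) \<ge> 1 \<Longrightarrow> q ^ Suc k - 1 = q * (q ^ k - 1) + (q - 1)"
proof -
  assume q: "q \<ge> 1"
  have "q ^ k \<ge> 1" using q by simp
  then obtain a where a: "q ^ k = Suc a" by (metis Suc_le_D One_nat_def)
  obtain b where b: "q = Suc b" using q by (metis Suc_le_D One_nat_def)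
  show ?thesis by (simp only: power_Suc a) (simp add: b algebra_simps)
qed
lemma top_mod: "(q::nat) \<ge> 1 \<Longrightarrow> n \<ge> 1 \<Longrightarrow> (q ^ n - 1) mod q = q - 1"
proof -
  assume q: "q \<ge> 1" and n: "n \<ge> 1"
  then obtain k where k: "n = Suc k" by (metis Suc_le_D One_nat_def)
  have "(q ^ n - 1) mod q = (q * (q ^ k - 1) + (q - 1)) mod q" using top_decomp[OF q] k by simp
  also have "\<dots> = (q - 1) mod q" by simp
  also have "\<dots> = q - 1" using q by simp
  finally show ?thesis .
qed
lemma top_div: "(q::nat) \<ge> 1 \<Longrightarrow> n \<ge> 1 \<Longrightarrow> (q ^ n - 1) div q = q ^ (n - 1) - 1"
proof -
  assume q: "q \<ge> 1" and n: "n \<ge> 1"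
  then obtain k where k: "n = Suc k" by (metis Suc_le_D One_nat_def)
  have "(q ^ n - 1) div q = (q * (q ^ k - 1) + (q - 1)) div q" using top_decomp[OF q] k by simp
  also have "\<dots> = q ^ k - 1 + (q - 1) div q" using q div_mult_self1[of q "q - 1" "q ^ k - 1"] by (simp add: mult.commute add.commute)
  also have "\<dots> = q ^ k - 1" using q by simp
  finally show ?thesis using k by simp
qed

lemma qdigit_top: "q \<ge> 1 \<Longrightarrow> i < n \<Longrightarrow> qdigit q i (q ^ n - 1) = q - 1"
proof (induction i arbitrary: n)
  case 0 then show ?case using top_mod[of q n] by (simp add: qdigit_def)
next
  case (Suc i)
  then show ?case using Suc.IH[of "n - 1"] top_div[of q n] by (simp add: qdigit_shift)
qed

lemma wtq_top: "q \<ge> 1 \<Longrightarrow> wtq q n (q ^ n - 1) = n * (q - 1)"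
proof -
  assume q: "q \<ge> 1"
  have "(\<Sum>i<n. qdigit q i (q ^ n - 1)) = (\<Sum>i<n. q - 1)"
    using qdigit_top[OF q] by (intro sum.cong) auto
  then show ?thesis by (simp add: wtq_def)
qed

lemma wtq_zero: "wtq q n 0 = 0"
  by (simp add: wtq_def qdigit_def)

lemma alpha_order:
  fixes \<alpha> :: "'a::{field,finite}"
  assumes gen: "\<forall>x::'a. x \<noteq> 0 \<longrightarrow> (\<exists>u::nat. x = \<alpha> ^ u)"
    and N: "card (UNIV :: 'a set) \<ge> 3"
  shows "\<alpha> \<noteq> 0" and "\<And>d. 0 < d \<Longrightarrow> \<alpha> ^ d = 1 \<Longrightarrow> card (UNIV :: 'a set) - 1 \<le> d"
proof -
  have cm: "card (UNIV - {0::'a}) = card (UNIV :: 'a set) - 1"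
    by (simp add: card_Diff_singleton)
  show "\<alpha> \<noteq> 0"
  proof
    assume "\<alpha> = 0"
    then have "UNIV - {0::'a} \<subseteq> {1}" using gen by (auto simp: power_0_left split: if_splits)
    then have "card (UNIV - {0::'a}) \<le> 1" by (metis card.empty card.insert card_mono empty_iff finite.intros(1) finite.intros(2) One_nat_def)
    with cm N show False by simp
  qed
  fix d :: nat assume d: "0 < d" "\<alpha> ^ d = 1"
  have "UNIV - {0::'a} \<subseteq> (\<lambda>j. \<alpha> ^ j) ` {..<d}"
  proof
    fix x :: 'a assume "x \<in> UNIV - {0}"
    then obtain u where u: "x = \<alpha> ^ u" using gen by auto
    have "\<alpha> ^ u = \<alpha> ^ (d * (u div d) + u mod d)" by simp
    also have "\<dots> = \<alpha> ^ (u mod d)" by (simp only: power_add power_mult d(2) power_one mult_1_left)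
    finally show "x \<in> (\<lambda>j. \<alpha> ^ j) ` {..<d}" using u d(1) by auto
  qed
  then have "card (UNIV - {0::'a}) \<le> card ((\<lambda>j. \<alpha> ^ j) ` {..<d})" by (intro card_mono) auto
  also have "\<dots> \<le> d" using card_image_le[of "{..<d}" "\<lambda>j. \<alpha> ^ j"] by simp
  finally show "card (UNIV :: 'a set) - 1 \<le> d" using cm by simp
qed

lemma split_eq:
  fixes a b w k :: int
  assumes "even (w + k)" "k \<ge> 0"
  shows "(a + b = w \<and> \<bar>a - b\<bar> = k) \<longleftrightarrow>
    ((a = (w + k) div 2 \<and> b = (w - k) div 2) \<or> (a = (w - k) div 2 \<and> b = (w + k) div 2))"
proof -
  obtain h where h: "w + k = 2 * h" using assms(1) by blast
  have "(w - k) div 2 = h - k" using h by simp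
  moreover have "(w + k) div 2 = h" using h by simp
  ultimately show ?thesis using h assms(2) by auto
qed



lemma Cnt_Ssum:
  assumes "m \<ge> 1"
  shows "int (card {g \<in> PiE {..<m} (\<lambda>_. {..<q}). int (sum g {..<m}) = t}) = Ssum m q t"
proof (cases "t < 0")
  case True
  have "{g \<in> PiE {..<m} (\<lambda>_. {..<q}). int (sum g {..<m}) = t} = {}" using True by (auto simp del: of_nat_sum)
  moreover have "Ssum m q t = 0" unfolding Ssum_def
  proof (intro sum.neutral ballI)
    fix i assume "i \<in> {0..m}"
    have "int i * int q \<ge> 0" by simp
    then have "t - int i * int q < 0" using True by linarith
    then show "(-1) ^ i * int (m choose i) * ibinom (t - int i * int q + int m - 1) (t - int i * int q) = 0"
      by (simp add: ibinom_def)
  qed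
  ultimately show ?thesis by (simp only: card.empty of_nat_0)
next
  case False
  then have "t = int (nat t)" by simp
  then obtain s where s: "t = int s" by blast
  have "{g \<in> PiE {..<m} (\<lambda>_. {..<q}). int (sum g {..<m}) = t} = {g \<in> PiE {..<m} (\<lambda>_. {..<q}). sum g {..<m} = s}"
    using s by (simp only: of_nat_eq_iff)
  then have "int (card {g \<in> PiE {..<m} (\<lambda>_. {..<q}). int (sum g {..<m}) = t}) =
    (\<Sum>i\<le>m. (-1)^i * int (m choose i) * (if i*q \<le> s then int ((s - i*q + m - 1) choose (s - i*q)) else 0))"
    using count_tuples[OF assms, of q s] by simp
  also have "\<dots> = Ssum m q t" unfolding Ssum_def atMost_atLeast0
  proof (intro sum.cong refl)
    fix i assume "i \<in> {0..m}"
    show "(-1)^i * int (m choose i) * (if i*q \<le> s then int ((s - i*q + m - 1) choose (s - i*q)) else 0) =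
      (-1) ^ i * int (m choose i) * ibinom (t - int i * int q + int m - 1) (t - int i * int q)"
    proof (cases "i * q \<le> s")
      case True
      have d: "t - int i * int q = int (s - i*q)" using True s by (simp add: of_nat_diff)
      have d2: "int (s - i*q + m - 1) = int (s - i*q) + int m - 1" using assms by (simp add: of_nat_diff)
      have e1: "nat (t - int i * int q + int m - 1) = s - i*q + m - 1" using d d2 by simp
      have e2: "nat (t - int i * int q) = s - i*q" using d by simp
      have "\<not> t - int i * int q < 0" using True s
        by (simp add: of_nat_mult[symmetric] del: of_nat_mult)
      then show ?thesis using True by (simp add: ibinom_def e1 e2)
    next
      case False
      then have "t - int i * int q < 0" using s
        by (simp add: of_nat_mult[symmetric] del: of_nat_mult)
      then show ?thesis using False by (simp add: ibinom_def)
    qed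
  qed
  finally show ?thesis .
qed



theorem lemma3p2:
  fixes \<alpha> :: "'a::{field,finite}"
    and p l q m n r k :: nat
  assumes "prime p" and "l \<ge> 1" and "q = p ^ l"
    and "m \<ge> 1" and "n = 2 * m"
    and "card (UNIV :: 'a set) = q ^ n"
    and "\<forall>x::'a. x \<noteq> 0 \<longrightarrow> (\<exists>u::nat. x = \<alpha> ^ u)"
    and "r \<le> n * (q - 1)"
    and "k \<le> m * (q - 1)" and "even k \<longleftrightarrow> even r"
  shows "int (card {\<alpha> ^ u | u. u \<le> q ^ n - 1 \<and> wtq q n u = n * (q - 1) - r
                      \<and> \<bar>int (Oq q n u) - int (Eq q n u)\<bar> = int k})
         = (if k \<noteq> 0
            then 2 * Ssum m q ((int (n * (q - 1)) - int r - int k) div 2)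
                   * Ssum m q ((int (n * (q - 1)) - int r + int k) div 2)
            else (Ssum m q ((int (n * (q - 1)) - int r) div 2)) ^ 2)"
proof -
  have p2: "p \<ge> 2" using assms(1) by (simp add: prime_ge_2_nat)
  have "p ^ 1 \<le> p ^ l" using assms(2) p2 by (intro power_increasing) auto
  then have q2: "q \<ge> 2" using p2 assms(3) by simp
  have n2: "n \<ge> 2" using assms(4,5) by simp
  have "q ^ 2 \<le> q ^ n" using q2 n2 by (intro power_increasing) auto
  moreover have "4 \<le> q ^ 2" using mult_le_mono[OF q2 q2] by (simp add: power2_eq_square)
  ultimately have qn4: "q ^ n \<ge> 4" by simp
  have card3: "card (UNIV :: 'a set) \<ge> 3" using qn4 assms(6) by simp
  define w where "w = n * (q - 1) - r"
  define S where "S = {u. u < q ^ n \<and> wtq q n u = w \<and> \<bar>int (Oq q n u) - int (Eq q n u)\<bar> = int k}"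
  have setE: "{\<alpha> ^ u | u. u \<le> q ^ n - 1 \<and> wtq q n u = n * (q - 1) - r
                      \<and> \<bar>int (Oq q n u) - int (Eq q n u)\<bar> = int k} = (\<lambda>u. \<alpha> ^ u) ` S"
    using qn4 unfolding S_def w_def by auto
  have a0: "\<alpha> \<noteq> 0" using alpha_order(1)[OF assms(7) card3] .
  have ord: "\<And>d. 0 < d \<Longrightarrow> \<alpha> ^ d = 1 \<Longrightarrow> q ^ n - 1 \<le> d"
    using alpha_order(2)[OF assms(7) card3] assms(6) by simp
  have wpos: "n * (q - 1) > 0" using q2 n2 by simp
  have key: False if "u \<in> S" "v \<in> S" "u < v" "\<alpha> ^ u = \<alpha> ^ v" for u v
  proof -
    have "\<alpha> ^ v = \<alpha> ^ u * \<alpha> ^ (v - u)" using that(3) by (simp add: power_add[symmetric])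
    then have "\<alpha> ^ (v - u) = 1" using that(4) a0 by simp
    then have "q ^ n - 1 \<le> v - u" using ord that(3) by simp
    moreover have "v < q ^ n" using that(2) S_def by simp
    ultimately have "u = 0" "v = q ^ n - 1" using that(3) by arith+
    then have "wtq q n 0 = w" "wtq q n (q ^ n - 1) = w" using that(1,2) S_def by auto
    then show False using wtq_zero wtq_top[of q n] q2 wpos by simp
  qed
  have inj: "inj_on (\<lambda>u. \<alpha> ^ u) S"
  proof (rule inj_onI)
    fix u v assume "u \<in> S" "v \<in> S" "\<alpha> ^ u = \<alpha> ^ v"
    then show "u = v" using key[of u v] key[of v u] by (metis linorder_neqE_nat)
  qed
  have c1: "card {\<alpha> ^ u | u. u \<le> q ^ n - 1 \<and> wtq q n u = n * (q - 1) - r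
                      \<and> \<bar>int (Oq q n u) - int (Eq q n u)\<bar> = int k} = card S"
    unfolding setE using inj by (rule card_image)
  define T where "T = PiE {..<m} (\<lambda>_. {..<q})"
  define \<phi> where "\<phi> u = (restrict (\<lambda>j. qdigit q (2*j+1) u) {..<m}, restrict (\<lambda>j. qdigit q (2*j) u) {..<m})" for u
  have oddset: "{i. i < n \<and> odd i} = (\<lambda>j. 2*j+1) ` {..<m}"
  proof (intro set_eqI iffI)
    fix i assume "i \<in> {i. i < n \<and> odd i}"
    then have "i = 2 * (i div 2) + 1" "i div 2 < m" using assms(5) by auto
    then show "i \<in> (\<lambda>j. 2*j+1) ` {..<m}" by blast
  qed (auto simp: assms(5))
  have evenset: "{i. i < n \<and> even i} = (\<lambda>j. 2*j) ` {..<m}"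
  proof (intro set_eqI iffI)
    fix i assume "i \<in> {i. i < n \<and> even i}"
    then have "i = 2 * (i div 2)" "i div 2 < m" using assms(5) by auto
    then show "i \<in> (\<lambda>j. 2*j) ` {..<m}" by blast
  qed (auto simp: assms(5))
  have Oeq: "Oq q n u = sum (fst (\<phi> u)) {..<m}" for u
  proof -
    have "Oq q n u = sum (\<lambda>j. qdigit q (2*j+1) u) {..<m}"
      unfolding Oq_def oddset by (subst sum.reindex) (auto simp: inj_on_def)
    then show ?thesis unfolding \<phi>_def by simp
  qed
  have Eeq: "Eq q n u = sum (snd (\<phi> u)) {..<m}" for u
  proof -
    have "Eq q n u = sum (\<lambda>j. qdigit q (2*j) u) {..<m}"
      unfolding Eq_def evenset by (subst sum.reindex) (auto simp: inj_on_def)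
    then show ?thesis unfolding \<phi>_def by simp
  qed
  have Weq: "wtq q n u = Oq q n u + Eq q n u" for u
  proof -
    have "{..<n} = {i. i < n \<and> odd i} \<union> {i. i < n \<and> even i}" by auto
    then show ?thesis unfolding wtq_def Oq_def Eq_def
      by (simp add: sum.union_disjoint[symmetric] disjoint_iff)
  qed
  have \<phi>inj: "inj_on \<phi> {..<q ^ n}"
  proof (rule inj_onI)
    fix u v assume u: "u \<in> {..<q ^ n}" and v: "v \<in> {..<q ^ n}" and e: "\<phi> u = \<phi> v"
    have dig: "qdigit q i u = qdigit q i v" if "i < n" for i
    proof (cases "odd i")
      case True
      then have i: "i = 2 * (i div 2) + 1" "i div 2 < m" using that assms(5) by auto
      have "restrict (\<lambda>j. qdigit q (2*j+1) u) {..<m} (i div 2) = restrict (\<lambda>j. qdigit q (2*j+1) v) {..<m} (i div 2)"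
        using e unfolding \<phi>_def by simp
      then have "qdigit q (2 * (i div 2) + 1) u = qdigit q (2 * (i div 2) + 1) v"
        using i(2) by simp
      then show ?thesis using i(1) by simp
    next
      case False
      then have i: "i = 2 * (i div 2)" "i div 2 < m" using that assms(5) by auto
      have "restrict (\<lambda>j. qdigit q (2*j) u) {..<m} (i div 2) = restrict (\<lambda>j. qdigit q (2*j) v) {..<m} (i div 2)"
        using e unfolding \<phi>_def by simp
      then have "qdigit q (2 * (i div 2)) u = qdigit q (2 * (i div 2)) v"
        using i(2) by simp
      then show ?thesis using i(1) by simp
    qed
    have "u = u mod q ^ n" using u by simp
    also have "\<dots> = (\<Sum>i<n. qdigit q i u * q ^ i)" by (rule digits_mod)
    also have "\<dots> = (\<Sum>i<n. qdigit q i v * q ^ i)" using dig by (intro sum.cong) auto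
    also have "\<dots> = v mod q ^ n" by (rule digits_mod[symmetric])
    also have "\<dots> = v" using v by simp
    finally show "u = v" .
  qed
  have fT: "finite T" unfolding T_def by (simp add: finite_PiE)
  have cT: "card T = q ^ m" unfolding T_def by (simp add: card_PiE)
  have \<phi>sub: "\<phi> ` {..<q ^ n} \<subseteq> T \<times> T"
  proof
    fix z assume "z \<in> \<phi> ` {..<q ^ n}"
    then obtain u where zu: "z = \<phi> u" by auto
    have "qdigit q i u < q" for i using q2 by (simp add: qdigit_def)
    then show "z \<in> T \<times> T" unfolding zu \<phi>_def T_def by (simp add: Pi_iff)
  qed
  have \<phi>img: "\<phi> ` {..<q ^ n} = T \<times> T"
  proof (rule card_subset_eq)
    show "finite (T \<times> T)" using fT by simp
    show "\<phi> ` {..<q ^ n} \<subseteq> T \<times> T" by (rule \<phi>sub)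
    have "card (\<phi> ` {..<q ^ n}) = q ^ n" using \<phi>inj by (simp add: card_image)
    also have "\<dots> = card (T \<times> T)" using cT assms(5) by (simp add: card_cartesian_product power_add[symmetric] mult_2)
    finally show "card (\<phi> ` {..<q ^ n}) = card (T \<times> T)" .
  qed
  define Cs where "Cs t = {a \<in> T. int (sum a {..<m}) = t}" for t
  define x where "x = (int w + int k) div 2"
  define y where "y = (int w - int k) div 2"
  have evw: "even (int w + int k)"
  proof -
    have "even (r + k)" using assms(10) by auto
    moreover have "int w + int k = 2 * int (m * (q - 1)) + 2 * int k - int (r + k)"
      using assms(8) assms(5) unfolding w_def by (simp add: of_nat_diff)
    ultimately show ?thesis by simp
  qed
  have cond: "(wtq q n u = w \<and> \<bar>int (Oq q n u) - int (Eq q n u)\<bar> = int k) \<longleftrightarrow>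
     ((int (Oq q n u) = x \<and> int (Eq q n u) = y) \<or> (int (Oq q n u) = y \<and> int (Eq q n u) = x))" for u
  proof -
    have f1: "(wtq q n u = w) \<longleftrightarrow> (int (Oq q n u) + int (Eq q n u) = int w)"
      by (simp only: Weq[of u] of_nat_add[symmetric] of_nat_eq_iff)
    have f2: "(int (Oq q n u) + int (Eq q n u) = int w \<and> \<bar>int (Oq q n u) - int (Eq q n u)\<bar> = int k) \<longleftrightarrow>
      ((int (Oq q n u) = (int w + int k) div 2 \<and> int (Eq q n u) = (int w - int k) div 2) \<or>
       (int (Oq q n u) = (int w - int k) div 2 \<and> int (Eq q n u) = (int w + int k) div 2))"
      by (rule split_eq[OF evw of_nat_0_le_iff])
    show ?thesis unfolding x_def y_def by (simp only: f1 f2)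
  qed
  have memC: "pr \<in> Cs x \<times> Cs y \<union> Cs y \<times> Cs x \<longleftrightarrow> fst pr \<in> T \<and> snd pr \<in> T \<and>
     ((int (sum (fst pr) {..<m}) = x \<and> int (sum (snd pr) {..<m}) = y) \<or>
      (int (sum (fst pr) {..<m}) = y \<and> int (sum (snd pr) {..<m}) = x))" for pr
    unfolding Cs_def by (cases pr) auto
  have memS: "u \<in> S \<longleftrightarrow> u < q ^ n \<and>
     ((int (sum (fst (\<phi> u)) {..<m}) = x \<and> int (sum (snd (\<phi> u)) {..<m}) = y) \<or>
      (int (sum (fst (\<phi> u)) {..<m}) = y \<and> int (sum (snd (\<phi> u)) {..<m}) = x))" for u
    unfolding S_def mem_Collect_eq cond[of u] by (simp only: Oeq Eeq)
  have imgS: "\<phi> ` S = Cs x \<times> Cs y \<union> Cs y \<times> Cs x"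
  proof (intro set_eqI iffI)
    fix z assume "z \<in> \<phi> ` S"
    then obtain u where u: "u \<in> S" "z = \<phi> u" by blast
    have "u < q ^ n" using u(1) memS by blast
    then have "\<phi> u \<in> T \<times> T" using \<phi>sub by blast
    then show "z \<in> Cs x \<times> Cs y \<union> Cs y \<times> Cs x"
      using memS[of u] u memC[of "\<phi> u"] by (simp add: mem_Times_iff)
  next
    fix z assume z: "z \<in> Cs x \<times> Cs y \<union> Cs y \<times> Cs x"
    then have "z \<in> T \<times> T" using memC[of z] by (simp add: mem_Times_iff)
    then have "z \<in> \<phi> ` {..<q ^ n}" using \<phi>img by simp
    then obtain u where u: "u < q ^ n" "z = \<phi> u" by blast
    have c: "(int (sum (fst z) {..<m}) = x \<and> int (sum (snd z) {..<m}) = y) \<or>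
      (int (sum (fst z) {..<m}) = y \<and> int (sum (snd z) {..<m}) = x)" using z memC[of z] by blast
    have "u \<in> S" using u(1) c unfolding memS[of u] u(2)[symmetric] by blast
    then show "z \<in> \<phi> ` S" using u by blast
  qed
  have c2: "card S = card (Cs x \<times> Cs y \<union> Cs y \<times> Cs x)"
  proof -
    have "S \<subseteq> {..<q ^ n}" unfolding S_def by auto
    then have "inj_on \<phi> S" using \<phi>inj inj_on_subset by blast
    then have "card S = card (\<phi> ` S)" by (simp add: card_image)
    then show ?thesis using imgS by simp
  qed
  have fC: "finite (Cs t)" for t unfolding Cs_def using fT by simp
  have CS: "int (card (Cs t)) = Ssum m q t" for t
    unfolding Cs_def T_def by (rule Cnt_Ssum[OF assms(4)])
  have wint: "int (n * (q - 1)) - int r = int w" unfolding w_def using assms(8) by (simp add: of_nat_diff)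
  show ?thesis
  proof (cases "k = 0")
    case True
    then have "x = y" unfolding x_def y_def by simp
    then have "card S = card (Cs x) * card (Cs x)" using c2 by (simp add: card_cartesian_product)
    then show ?thesis using True c1 CS[of x] unfolding wint x_def by (simp add: power2_eq_square)
  next
    case False
    have "x \<noteq> y" using False evw unfolding x_def y_def by presburger
    then have "(Cs x \<times> Cs y) \<inter> (Cs y \<times> Cs x) = {}" unfolding Cs_def by auto
    then have "card S = card (Cs x) * card (Cs y) + card (Cs y) * card (Cs x)"
      using c2 fC by (simp add: card_Un_disjoint card_cartesian_product)
    then show ?thesis using False c1 CS[of x] CS[of y] unfolding wint x_def y_def by simp
  qed
qed

end
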